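(* The affine scheme $\mathscr{H}_{\mathbb{A}}^{13}\cap\{p_{121}=p_{112}=p_{211}=0,\ p_{111}=1\}$ coincides with the cluster variety $X_{\mathsf{C}_2}$ under the identification of coordinates $u_1=\theta_{12}$, $u_2=\theta_{23}$, $u_3=\theta_{31}$, $(x_{11},x_{21})=(A_{12},\theta_3)$, $(x_{12},x_{22})=(A_{23},\theta_1)$, $(x_{13},x_{23})=(A_{31},\theta_2)$, $p_{212}=-A_1$, $p_{221}=-A_2$, $p_{122}=-A_3$, $p_{222}=\lambda$ (left-hand sides are coordinates of $\mathscr{H}_{\mathbb{A}}^{13}$, right-hand sides those of $X_{\mathsf{C}_2}$).
   Context: $\mathscr{H}_{\mathbb{A}}^{13}\subset\mathbb{A}^{17}$ (coordinates $u_1,u_2,u_3$, $x_{ij}$ with $i\in\{1,2\},j\in\{1,2,3\}$, $p_{abc}$ with $a,b,c\in\{1,2\}$) is defined by $-u_1\bm{x}_1+D^{(3)}\bm{x}_2=\bm{0}$, $-u_2\bm{x}_2+D^{(1)}\bm{x}_3=\bm{0}$, $-u_3\bm{x}_3-(D^{(2)})^{\dagger}\bm{x}_1=\bm{0}$, $u_2u_3+\det D^{(1)}=0$, $u_3u_1+\det D^{(2)}=0$, $u_1u_2+\det D^{(3)}=0$, where $\bm{x}_j=(x_{1j},x_{2j})^t$, $M^\dagger$ is the adjugate, $D^{(1)}_{ij}=p_{1ij}x_{21}-p_{2ij}x_{11}$, $D^{(2)}_{ij}=p_{i1j}x_{22}-p_{i2j}x_{12}$, $D^{(3)}_{ij}=p_{ij1}x_{23}-p_{ij2}x_{13}$,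 $D^{(k)}$ has rows $(-D^{(k)}_{12},D^{(k)}_{11})$, $(-D^{(k)}_{22},D^{(k)}_{21})$. The cluster variety of type $C_2$, $X_{\mathsf{C}_2}$, is the affine scheme in the $13$-dimensional affine space with coordinates $\theta_{12},\theta_{23},\theta_{31},\theta_1,\theta_2,\theta_3,A_{12},A_{23},A_{31},A_1,A_2,A_3,\lambda$ defined by the nine equations $\theta_i\theta_j=A_{ij}\theta_{ij}+A_{jk}A_kA_{ki}$, $\theta_{ki}\theta_{ij}=A_i\theta_i^2+\lambda A_{jk}\theta_i+A_jA_{jk}^2A_k$, $\theta_i\theta_{jk}=A_{ij}A_j\theta_j+\lambda A_{ki}A_{ij}+A_kA_{ki}\theta_k$ for $(i,j,k)\in\{(1,2,3),(2,3,1),(3,1,2)\}$ (indices of $A_{\bullet\bullet},\theta_{\bullet\bullet}$ read as $12,23,31$). *)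

theory Defs
  imports Main
begin

text \<open>2x2 matrices over a commutative ring, stored as (m11, m12, m21, m22).\<close>

type_synonym 'a mat2 = "'a \<times> 'a \<times> 'a \<times> 'a"

definition mulv2 :: "'a::comm_ring_1 mat2 \<Rightarrow> 'a \<times> 'a \<Rightarrow> 'a \<times> 'a" where
  "mulv2 M v = (case M of (a, b, c, d) \<Rightarrow> case v of (x, y) \<Rightarrow> (a * x + b * y, c * x + d * y))"

definition det2 :: "'a::comm_ring_1 mat2 \<Rightarrow> 'a" where
  "det2 M = (case M of (a, b, c, d) \<Rightarrow> a * d - b * c)"

definition adj2 :: "'a::comm_ring_1 mat2 \<Rightarrow> 'a mat2" where
  "adj2 M = (case M of (a, b, c, d) \<Rightarrow> (d, - b, - c, a))"

definition Dmat :: "'a::comm_ring_1 \<Rightarrow> 'a \<Rightarrow> 'a \<Rightarrow> 'a \<Rightarrow> 'a mat2" where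
  "Dmat d11 d12 d21 d22 = (- d12, d11, - d22, d21)"

text \<open>Points of the affine scheme H^13_A in A^17 with values in a commutative ring.
  p is indexed by a b c \<in> {1,2}.\<close>
definition H13 :: "'a::comm_ring_1 \<Rightarrow> 'a \<Rightarrow> 'a \<Rightarrow> 'a \<Rightarrow> 'a \<Rightarrow> 'a \<Rightarrow> 'a \<Rightarrow> 'a \<Rightarrow> 'a
    \<Rightarrow> (nat \<Rightarrow> nat \<Rightarrow> nat \<Rightarrow> 'a) \<Rightarrow> bool" where
  "H13 u1 u2 u3 x11 x21 x12 x22 x13 x23 p \<longleftrightarrow>
    (let xv1 = (x11, x21); xv2 = (x12, x22); xv3 = (x13, x23);
         D1 = Dmat (p 1 1 1 * x21 - p 2 1 1 * x11) (p 1 1 2 * x21 - p 2 1 2 * x11)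
                   (p 1 2 1 * x21 - p 2 2 1 * x11) (p 1 2 2 * x21 - p 2 2 2 * x11);
         D2 = Dmat (p 1 1 1 * x22 - p 1 2 1 * x12) (p 1 1 2 * x22 - p 1 2 2 * x12)
                   (p 2 1 1 * x22 - p 2 2 1 * x12) (p 2 1 2 * x22 - p 2 2 2 * x12);
         D3 = Dmat (p 1 1 1 * x23 - p 1 1 2 * x13) (p 1 2 1 * x23 - p 1 2 2 * x13)
                   (p 2 1 1 * x23 - p 2 1 2 * x13) (p 2 2 1 * x23 - p 2 2 2 * x13)
     in (case mulv2 D3 xv2 of (a, b) \<Rightarrow> (- u1 * fst xv1 + a, - u1 * snd xv1 + b)) = (0, 0)
      \<and> (case mulv2 D1 xv3 of (a, b) \<Rightarrow> (- u2 * fst xv2 + a, - u2 * snd xv2 + b)) = (0, 0)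
      \<and> (case mulv2 (adj2 D2) xv1 of (a, b) \<Rightarrow> (- u3 * fst xv3 - a, - u3 * snd xv3 - b)) = (0, 0)
      \<and> u2 * u3 + det2 D1 = 0
      \<and> u3 * u1 + det2 D2 = 0
      \<and> u1 * u2 + det2 D3 = 0)"

definition C2rel :: "'a::comm_ring_1 \<Rightarrow> 'a \<Rightarrow> 'a \<Rightarrow> 'a \<Rightarrow> 'a \<Rightarrow> 'a \<Rightarrow> 'a \<Rightarrow> 'a \<Rightarrow> 'a
    \<Rightarrow> 'a \<Rightarrow> 'a \<Rightarrow> 'a \<Rightarrow> 'a \<Rightarrow> bool" where
  "C2rel ti tj tk tij tjk tki Ai Aj Ak Aij Ajk Aki lam \<longleftrightarrow>
     ti * tj = Aij * tij + Ajk * Ak * Aki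
   \<and> tki * tij = Ai * ti ^ 2 + lam * Ajk * ti + Aj * Ajk ^ 2 * Ak
   \<and> ti * tjk = Aij * Aj * tj + lam * Aki * Aij + Ak * Aki * tk"

definition XC2 :: "'a::comm_ring_1 \<Rightarrow> 'a \<Rightarrow> 'a \<Rightarrow> 'a \<Rightarrow> 'a \<Rightarrow> 'a \<Rightarrow> 'a \<Rightarrow> 'a \<Rightarrow> 'a
    \<Rightarrow> 'a \<Rightarrow> 'a \<Rightarrow> 'a \<Rightarrow> 'a \<Rightarrow> bool" where
  "XC2 t12 t23 t31 t1 t2 t3 A12 A23 A31 A1 A2 A3 lam \<longleftrightarrow>
     C2rel t1 t2 t3 t12 t23 t31 A1 A2 A3 A12 A23 A31 lam
   \<and> C2rel t2 t3 t1 t23 t31 t12 A2 A3 A1 A23 A31 A12 lam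
   \<and> C2rel t3 t1 t2 t31 t12 t23 A3 A1 A2 A31 A12 A23 lam"

definition pC2 :: "'a::comm_ring_1 \<Rightarrow> 'a \<Rightarrow> 'a \<Rightarrow> 'a \<Rightarrow> nat \<Rightarrow> nat \<Rightarrow> nat \<Rightarrow> 'a" where
  "pC2 A1 A2 A3 lam a b c =
     (if (a, b, c) = (1, 1, 1) then 1
      else if (a, b, c) = (1, 2, 1) then 0
      else if (a, b, c) = (1, 1, 2) then 0
      else if (a, b, c) = (2, 1, 1) then 0
      else if (a, b, c) = (2, 1, 2) then - A1
      else if (a, b, c) = (2, 2, 1) then - A2
      else if (a, b, c) = (1, 2, 2) then - A3
      else if (a, b, c) = (2, 2, 2) then lam
      else 0)"

end

theory Submission
  imports Defs
begin

lemma eqI1: "(a::'a::comm_ring_1) - b = c - d \<Longrightarrow> (a = b) \<longleftrightarrow> (c = d)"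
  by (metis eq_iff_diff_eq_0)

lemma eqI2: "(a::'a::comm_ring_1) - b = d - c \<Longrightarrow> (a = b) \<longleftrightarrow> (c = d)"
  by (metis eq_iff_diff_eq_0 minus_diff_eq neg_equal_0_iff_equal)

theorem proposition7p2:
  fixes t12 t23 t31 t1 t2 t3 A12 A23 A31 A1 A2 A3 lam :: "'a::comm_ring_1"
  shows "H13 t12 t23 t31 A12 t3 A23 t1 A31 t2 (pC2 A1 A2 A3 lam)
         \<longleftrightarrow> XC2 t12 t23 t31 t1 t2 t3 A12 A23 A31 A1 A2 A3 lam"
proof -
  have h1: "(t2 * t1 - A3 * A31 * A23 = t12 * A12) = (t1 * t2 = A12 * t12 + A23 * A3 * A31)"
    by (rule eqI1) (simp add: algebra_simps power2_eq_square)
  have h2: "((lam * A31 + A2 * t2) * A23 + A1 * A31 * t1 = t12 * t3) = (t3 * t12 = A31 * A1 * t1 + lam * A23 * A31 + A2 * A23 * t2)"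
    by (rule eqI2) (simp add: algebra_simps power2_eq_square)
  have h3: "(t3 * t2 - A1 * A12 * A31 = t23 * A23) = (t2 * t3 = A23 * t23 + A31 * A1 * A12)"
    by (rule eqI1) (simp add: algebra_simps power2_eq_square)
  have h4: "((lam * A12 + A3 * t3) * A31 + A2 * A12 * t2 = t23 * t1) = (t1 * t23 = A12 * A2 * t2 + lam * A31 * A12 + A3 * A31 * t3)"
    by (rule eqI2) (simp add: algebra_simps power2_eq_square)
  have h5: "(- (t31 * A31) = A2 * A23 * A12 - t1 * t3) = (t3 * t1 = A31 * t31 + A12 * A2 * A23)"
    by (rule eqI1) (simp add: algebra_simps power2_eq_square)
  have h6: "(- (t31 * t2) = (- (lam * A23) - A1 * t1) * A12 - A3 * A23 * t3) = (t2 * t31 = A23 * A3 * t3 + lam * A12 * A23 + A1 * A12 * t1)"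
    by (rule eqI2) (simp add: algebra_simps power2_eq_square)
  have h7: "(t23 * t31 + (- (A1 * A12 * (A2 * A12)) - t3 * (lam * A12 + A3 * t3)) = 0) = (t23 * t31 = A3 * t3\<^sup>2 + lam * A12 * t3 + A1 * A12\<^sup>2 * A2)"
    by (rule eqI1) (simp add: algebra_simps power2_eq_square)
  have h8: "(t31 * t12 + (- (A3 * A23 * (A2 * A23)) - t1 * (lam * A23 + A1 * t1)) = 0) = (t31 * t12 = A1 * t1\<^sup>2 + lam * A23 * t1 + A2 * A23\<^sup>2 * A3)"
    by (rule eqI1) (simp add: algebra_simps power2_eq_square)
  have h9: "(t12 * t23 + (- (A3 * A31 * (A1 * A31)) - t2 * (lam * A31 + A2 * t2)) = 0) = (t12 * t23 = A2 * t2\<^sup>2 + lam * A31 * t2 + A3 * A31\<^sup>2 * A1)"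
    by (rule eqI1) (simp add: algebra_simps power2_eq_square)
  show ?thesis
    apply (simp add: H13_def XC2_def C2rel_def pC2_def Dmat_def mulv2_def adj2_def det2_def Let_def)
    using h1 h2 h3 h4 h5 h6 h7 h8 h9 by blast
qed

end
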